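(* For the $\mathrm{ECR}(\beta,\lambda)$ model with i.i.d. sample of size $n$, let $C(\beta)=\beta^3-7\beta^2+10\beta+72$. The Cox–Snell second-order bias terms of the maximum likelihood estimators are $$B_\beta=\frac1n\Bigg[\beta^3+13\beta^2+122\beta+380-\frac{699840}{19321(\beta+5)}+\frac{96000}{361(\beta+6)}+\frac{432(4085783\beta^2-8192586\beta-40352456)}{2641\,C(\beta)^2}-\frac{12(70740551\beta^2+3809213278\beta-35831044156)}{6974881\,C(\beta)}\Bigg],$$ $$B_\lambda=\frac\lambda n\Bigg[8\beta+86+\frac{49}{270\beta}-\frac{1679616}{96605(\beta+5)}+\frac{80000}{1083(\beta+6)}-\frac{8(84037561\beta^2+21509105\beta-393761162)}{7923\,C(\beta)^2}+\frac{356431397749\beta^2-158970444943\beta-4636191041858}{376643574\,C(\beta)}\Bigg].$$ (The bias-corrected estimators are $\tilde\beta=\hat\beta-B_\beta(\hat\beta,\hat\lambda)$, $\tilde\lambda=\hat\lambda-B_\lambda(\hat\beta,\hat\lambda)$.)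
   Context: The $\mathrm{ECR}(\beta,\lambda)$ distribution ($\beta,\lambda>0$) has density $f(x)=\beta\lambda\,\frac{x}{(\lambda^2+x^2)^{3/2}}\left(1-\frac{\lambda}{\sqrt{\lambda^2+x^2}}\right)^{\beta-1}$, $x>0$. For an i.i.d. sample of size $n$ with log-likelihood $\ell=\sum\log f(X_i)$ and $\theta=(\theta_1,\theta_2)=(\beta,\lambda)$, set $\kappa_{rs}=\mathbb E[\partial^2\ell/\partial\theta_r\partial\theta_s]$, $\kappa_{rst}=\mathbb E[\partial^3\ell/\partial\theta_r\partial\theta_s\partial\theta_t]$, $\kappa_{rs}^{(t)}=\partial\kappa_{rs}/\partial\theta_t$, and let $(\kappa^{rs})$ be the inverse of the $2\times2$ matrix $(\kappa_{rs})$. The Cox–Snell second-order bias term of the MLE of $\theta_i$ is $B_{\theta_i}=\sum_{r,s,t\in\{1,2\}}\kappa^{ir}\kappa^{st}\left(\kappa_{rs}^{(t)}-\tfrac12\kappa_{rst}\right)$ (so that $\mathbb E(\hat\theta_i)-\theta_i=B_{\theta_i}+O(n^{-2})$). *)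

theory Defs
  imports "HOL-Analysis.Analysis"
begin

definition ecr_pdf :: "real \<Rightarrow> real \<Rightarrow> real \<Rightarrow> real" where
  "ecr_pdf b l x = b * l * x / (l\<^sup>2 + x\<^sup>2) powr (3/2)
      * (1 - l / sqrt (l\<^sup>2 + x\<^sup>2)) powr (b - 1)"

definition ecr_logpdf :: "real \<Rightarrow> real \<Rightarrow> real \<Rightarrow> real" where
  "ecr_logpdf x b l = ln (ecr_pdf b l x)"

definition pd :: "nat \<Rightarrow> (real \<Rightarrow> real \<Rightarrow> real) \<Rightarrow> real \<Rightarrow> real \<Rightarrow> real" where
  "pd r g b l = (if r = 1 then deriv (\<lambda>b'. g b' l) b else deriv (\<lambda>l'. g b l') l)"

definition ecr_expect :: "real \<Rightarrow> real \<Rightarrow> (real \<Rightarrow> real) \<Rightarrow> real" where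
  "ecr_expect b l h = (LINT x:{0<..}|lborel. h x * ecr_pdf b l x)"

text \<open>For an i.i.d. sample of size n, the log-likelihood is the sum of n log-densities,
  so its expected derivatives are n times those of one observation.\<close>
definition kappa2 :: "nat \<Rightarrow> nat \<Rightarrow> nat \<Rightarrow> real \<Rightarrow> real \<Rightarrow> real" where
  "kappa2 n r s b l = real n * ecr_expect b l (\<lambda>x. pd r (pd s (ecr_logpdf x)) b l)"

definition kappa3 :: "nat \<Rightarrow> nat \<Rightarrow> nat \<Rightarrow> nat \<Rightarrow> real \<Rightarrow> real \<Rightarrow> real" where
  "kappa3 n r s t b l = real n * ecr_expect b l (\<lambda>x. pd r (pd s (pd t (ecr_logpdf x))) b l)"

definition kappa2_d :: "nat \<Rightarrow> nat \<Rightarrow> nat \<Rightarrow> nat \<Rightarrow> real \<Rightarrow> real \<Rightarrow> real" where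
  "kappa2_d n r s t b l = pd t (kappa2 n r s) b l"

definition kappa_inv :: "nat \<Rightarrow> nat \<Rightarrow> nat \<Rightarrow> real \<Rightarrow> real \<Rightarrow> real" where
  "kappa_inv n r s b l =
     (let d = kappa2 n 1 1 b l * kappa2 n 2 2 b l - kappa2 n 1 2 b l * kappa2 n 2 1 b l
      in (if r = 1 \<and> s = 1 then kappa2 n 2 2 b l
          else if r = 2 \<and> s = 2 then kappa2 n 1 1 b l
          else - kappa2 n r s b l) / d)"

definition cox_snell_bias :: "nat \<Rightarrow> nat \<Rightarrow> real \<Rightarrow> real \<Rightarrow> real" where
  "cox_snell_bias n i b l =
     (\<Sum>r\<in>{1,2}. \<Sum>s\<in>{1,2}. \<Sum>t\<in>{1,2::nat}.
        kappa_inv n i r b l * kappa_inv n s t b l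
        * (kappa2_d n r s t b l - kappa3 n r s t b l / 2))"

definition Cpoly :: "real \<Rightarrow> real" where
  "Cpoly b = b^3 - 7*b^2 + 10*b + 72"

end

theory Submission imports Defs "HOL-Real_Asymp.Real_Asymp" begin

definition Wf :: "real \<Rightarrow> real \<Rightarrow> real" where "Wf l x = l / sqrt (l\<^sup>2 + x\<^sup>2)"

definition mom :: "real \<Rightarrow> nat \<Rightarrow> real" where
  "mom b k = (\<Sum>j\<le>k. real (k choose j) * (-1)^j * b / (b + real j))"

lemma Wf_bounds: assumes "l > 0" "x > 0" shows "0 < Wf l x" "Wf l x < 1"
proof -
  have "l < sqrt (l\<^sup>2 + x\<^sup>2)"
    using assms by (metis add_less_cancel_left add_0_right real_less_rsqrt zero_less_power2 less_irrefl linorder_neqE_linordered_idom power2_less_imp_less less_eq_real_def sqrt_ge_absD abs_of_pos power2_eq_square)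
  moreover have "0 < sqrt (l\<^sup>2 + x\<^sup>2)" using assms by (simp add: add_pos_pos)
  ultimately show "0 < Wf l x" "Wf l x < 1" using assms unfolding Wf_def
    by (simp_all only: divide_pos_pos divide_less_eq_1_pos)
qed

lemma pow32: assumes "(q::real) > 0" shows "q powr (3/2) = (sqrt q)^3"
proof -
  have "q powr (3/2) = q powr (1/2 + 1/2 + 1/2)" by simp
  also have "\<dots> = (q powr (1/2))^3" by (simp only: powr_add) (simp add: power3_eq_cube)
  finally show ?thesis using assms by (simp add: powr_half_sqrt)
qed

lemma pdf_alt: assumes "l > 0" "x > 0"
  shows "ecr_pdf b l x = b * l * x / (sqrt (l\<^sup>2 + x\<^sup>2))^3 * (1 - Wf l x) powr (b - 1)"
  using assms by (simp add: ecr_pdf_def pow32 Wf_def add_pos_pos)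

lemma u_deriv: assumes "l > 0"
  shows "((\<lambda>x. 1 - Wf l x) has_real_derivative l * x / (sqrt (l\<^sup>2 + x\<^sup>2))^3) (at x)"
proof -
  have q: "l\<^sup>2 + x\<^sup>2 > 0" using assms by (simp add: add_pos_nonneg)
  show ?thesis unfolding Wf_def
    using q by (auto intro!: derivative_eq_intros simp: power2_eq_square power3_eq_cube field_simps)
qed


lemma aux1: "c \<noteq> (0::real) \<Longrightarrow> kk * ss * bb / c * (c * (pp * vv) * ww) = (bb * ww * pp) * (kk * (ss * vv))"
  by (simp add: field_simps)

definition Fm :: "real \<Rightarrow> real \<Rightarrow> nat \<Rightarrow> real \<Rightarrow> real" where
  "Fm b l k x = (\<Sum>j\<le>k. real (k choose j) * (-1)^j * b / (b + real j) * (1 - Wf l x) powr (b + real j))"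

lemma Fm_deriv: assumes "b > 0" "l > 0" "x > 0"
  shows "(Fm b l k has_real_derivative Wf l x ^ k * ecr_pdf b l x) (at x)"
proof -
  define u where "u = 1 - Wf l x"
  define u' where "u' = l * x / (sqrt (l\<^sup>2 + x\<^sup>2))^3"
  have u0: "u > 0" "u < 1" using Wf_bounds[OF assms(2,3)] by (auto simp: u_def)
  have "\<And>j. j \<in> {..k} \<Longrightarrow> ((\<lambda>x. real (k choose j) * (-1)^j * b / (b + real j) * (1 - Wf l x) powr (b + real j))
     has_real_derivative real (k choose j) * (-1)^j * b / (b + real j) * ((b + real j) * u powr (b + real j - of_nat 1) * u')) (at x)"
  proof -
    fix j
    have "((\<lambda>x. (1 - Wf l x) powr (b + real j)) has_real_derivative (b + real j) * u powr (b + real j - of_nat 1) * u') (at x)"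
      unfolding u_def u'_def by (rule DERIV_fun_powr[OF u_deriv[OF assms(2)]]) (use u0 in \<open>simp add: u_def\<close>)
    then show "?thesis j" by (rule DERIV_cmult)
  qed
  then have D: "(Fm b l k has_real_derivative
       (\<Sum>j\<le>k. real (k choose j) * (-1)^j * b / (b + real j) * ((b + real j) * u powr (b + real j - of_nat 1) * u'))) (at x)"
    unfolding Fm_def by (rule DERIV_sum)
  have "(\<Sum>j\<le>k. real (k choose j) * (-1)^j * b / (b + real j) * ((b + real j) * u powr (b + real j - of_nat 1) * u'))
      = (\<Sum>j\<le>k. (b * u' * u powr (b - 1)) * (real (k choose j) * (- u)^j * 1^(k-j)))"
  proof (rule sum.cong[OF refl])
    fix j assume "j \<in> {..k}"
    have bj: "b + real j \<noteq> 0" using assms by simp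
    have "u powr (b + real j - of_nat 1) = u powr (b - 1) * u ^ j"
      using u0 by (simp add: powr_add[symmetric] powr_realpow[symmetric] algebra_simps)
    moreover have "real (k choose j) * (-1)^j * b / (b + real j) * ((b + real j) * (u powr (b - 1) * u ^ j) * u')
        = (b * u' * u powr (b - 1)) * (real (k choose j) * (- u)^j * 1^(k-j))"
      using aux1[OF bj, of "real (k choose j)" "(-1)^j" b "u powr (b - 1)" "u ^ j" u'] by (simp only: power_minus[of u j] power_one mult_1_right)
    ultimately show "real (k choose j) * (-1)^j * b / (b + real j) * ((b + real j) * u powr (b + real j - of_nat 1) * u')
        = (b * u' * u powr (b - 1)) * (real (k choose j) * (- u)^j * 1^(k-j))"
      by simp
  qed
  also have "\<dots> = (b * u' * u powr (b - 1)) * (- u + 1) ^ k"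
    by (simp only: binomial_ring[of "-u" 1 k] sum_distrib_left)
  also have "\<dots> = Wf l x ^ k * ecr_pdf b l x"
    using assms by (simp add: pdf_alt u_def u'_def)
  finally show ?thesis using D by simp
qed


lemma pdf_nonneg: assumes "b > 0" "l > 0" "x > 0" shows "ecr_pdf b l x \<ge> 0"
  using assms by (simp add: ecr_pdf_def)

lemma Wf_0: "l > 0 \<Longrightarrow> Wf l 0 = 1" by (simp add: Wf_def)

lemma Fm_at0: assumes "b > 0" "l > 0" shows "(Fm b l k \<longlongrightarrow> 0) (at_right 0)"
proof -
  have W: "((\<lambda>x. 1 - Wf l x) \<longlongrightarrow> 0) (at_right 0)"
  proof -
    have "isCont (\<lambda>x. 1 - Wf l x) 0" unfolding Wf_def using assms by (auto intro!: continuous_intros)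
    then have "((\<lambda>x. 1 - Wf l x) \<longlongrightarrow> 1 - Wf l 0) (at 0)" by (simp add: isCont_def)
    then show ?thesis using Wf_0[OF assms(2)] by (simp add: filterlim_at_split)
  qed
  have ev: "\<forall>\<^sub>F x in at_right 0. 0 \<le> 1 - Wf l x"
    unfolding eventually_at_right_field using Wf_bounds[OF assms(2)]
    by (intro exI[of _ 1]) (auto intro: less_imp_le)
  have "((\<lambda>x. \<Sum>j\<le>k. real (k choose j) * (-1)^j * b / (b + real j) * (1 - Wf l x) powr (b + real j)) \<longlongrightarrow>
        (\<Sum>j\<le>k. real (k choose j) * (-1)^j * b / (b + real j) * 0)) (at_right 0)"
    by (intro tendsto_sum tendsto_mult tendsto_const tendsto_zero_powrI[OF W tendsto_const ev]) (use assms in \<open>auto simp: add_pos_nonneg\<close>)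
  then show ?thesis unfolding Fm_def by simp
qed

lemma Fm_atinf: assumes "b > 0" "l > 0" shows "(Fm b l k \<longlongrightarrow> mom b k) at_top"
proof -
  have W: "((\<lambda>x. 1 - Wf l x) \<longlongrightarrow> 1) at_top"
    unfolding Wf_def using assms by real_asymp
  have "((\<lambda>x. \<Sum>j\<le>k. real (k choose j) * (-1)^j * b / (b + real j) * (1 - Wf l x) powr (b + real j)) \<longlongrightarrow>
        (\<Sum>j\<le>k. real (k choose j) * (-1)^j * b / (b + real j) * 1 powr (b + real j))) at_top"
    by (intro tendsto_sum tendsto_mult tendsto_const tendsto_powr[OF W tendsto_const]) auto
  then show ?thesis unfolding Fm_def mom_def by simp
qed

lemma moment: assumes "b > 0" "l > 0"
  shows "set_integrable lborel {0<..} (\<lambda>x. Wf l x ^ k * ecr_pdf b l x)"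
    "(LINT x:{0<..}|lborel. Wf l x ^ k * ecr_pdf b l x) = mom b k"
proof -
  note I = interval_integral_FTC_nonneg[where a=0 and b=\<infinity> and F="Fm b l k" and f="\<lambda>x. Wf l x ^ k * ecr_pdf b l x"
      and A=0 and B="mom b k"]
  have c: "isCont (\<lambda>x. Wf l x ^ k * ecr_pdf b l x) x" if "x > 0" for x
    using assms that Wf_bounds[OF assms(2) that] unfolding Wf_def ecr_pdf_def
    by (intro continuous_intros) (auto simp: add_pos_pos)
  have nn: "AE x in lborel. 0 < ereal x \<longrightarrow> ereal x < \<infinity> \<longrightarrow> 0 \<le> Wf l x ^ k * ecr_pdf b l x"
    using assms Wf_bounds[OF assms(2)] pdf_nonneg[OF assms]
    by (intro AE_I2 impI mult_nonneg_nonneg zero_le_power) (auto simp: zero_ereal_def intro: less_imp_le)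
  have A: "((Fm b l k \<circ> real_of_ereal) \<longlongrightarrow> 0) (at_right 0)"
    using Fm_at0[OF assms] by (simp add: zero_ereal_def ereal_tendsto_simps)
  have B: "((Fm b l k \<circ> real_of_ereal) \<longlongrightarrow> mom b k) (at_left \<infinity>)"
    using Fm_atinf[OF assms] by (simp add: ereal_tendsto_simps)
  have I1: "set_integrable lborel (einterval 0 \<infinity>) (\<lambda>x. Wf l x ^ k * ecr_pdf b l x)"
    "(LBINT x=0..\<infinity>. Wf l x ^ k * ecr_pdf b l x) = mom b k - 0"
    using I[OF _ _ _ nn A B] Fm_deriv[OF assms] c by (auto simp: zero_ereal_def)
  have e: "einterval 0 \<infinity> = {0::real<..}" by (simp add: zero_ereal_def)
  show "set_integrable lborel {0<..} (\<lambda>x. Wf l x ^ k * ecr_pdf b l x)" using I1(1) e by simp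
  show "(LINT x:{0<..}|lborel. Wf l x ^ k * ecr_pdf b l x) = mom b k"
    using I1(2) e by (simp add: interval_lebesgue_integral_def zero_ereal_def)
qed




lemma mom_vals: assumes "b > 0" shows
  "mom b 0 = 1" "mom b 1 = 1/(b+1)" "mom b 2 = 2/((b+1)*(b+2))" "mom b 3 = 6/((b+1)*(b+2)*(b+3))"
  "mom b 4 = 24/((b+1)*(b+2)*(b+3)*(b+4))" "mom b 5 = 120/((b+1)*(b+2)*(b+3)*(b+4)*(b+5))"
  "mom b 6 = 720/((b+1)*(b+2)*(b+3)*(b+4)*(b+5)*(b+6))"
proof -
  have p: "b + 1 \<noteq> 0" "b + 2 \<noteq> 0" "b + 3 \<noteq> 0" "b + 4 \<noteq> 0" "b + 5 \<noteq> 0" "b + 6 \<noteq> 0" "b \<noteq> 0"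
    using assms by auto
  show "mom b 0 = 1" using assms by (simp add: mom_def)
  have "mom b 1 = 1 - 1*b/(b+1)" using p by (simp add: mom_def eval_nat_numeral atMost_Suc)
  also have "\<dots> = 1/(b+1)" using p by (simp add: divide_simps; simp add: algebra_simps)
  finally show "mom b 1 = 1/(b+1)" .
  have "mom b 2 = 1 - 2*b/(b+1) + 1*b/(b+2)" using p by (simp add: mom_def eval_nat_numeral atMost_Suc)
  also have "\<dots> = 2/((b+1)*(b+2))" using p by (simp add: divide_simps; simp add: algebra_simps)
  finally show "mom b 2 = 2/((b+1)*(b+2))" .
  have "mom b 3 = 1 - 3*b/(b+1) + 3*b/(b+2) - 1*b/(b+3)" using p by (simp add: mom_def eval_nat_numeral atMost_Suc)
  also have "\<dots> = 6/((b+1)*(b+2)*(b+3))" using p by (simp add: divide_simps; simp add: algebra_simps)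
  finally show "mom b 3 = 6/((b+1)*(b+2)*(b+3))" .
  have "mom b 4 = 1 - 4*b/(b+1) + 6*b/(b+2) - 4*b/(b+3) + 1*b/(b+4)" using p by (simp add: mom_def eval_nat_numeral atMost_Suc)
  also have "\<dots> = 24/((b+1)*(b+2)*(b+3)*(b+4))" using p by (simp add: divide_simps; simp add: algebra_simps)
  finally show "mom b 4 = 24/((b+1)*(b+2)*(b+3)*(b+4))" .
  have "mom b 5 = 1 - 5*b/(b+1) + 10*b/(b+2) - 10*b/(b+3) + 5*b/(b+4) - 1*b/(b+5)" using p by (simp add: mom_def eval_nat_numeral atMost_Suc)
  also have "\<dots> = 120/((b+1)*(b+2)*(b+3)*(b+4)*(b+5))" using p by (simp add: divide_simps; simp add: algebra_simps)
  finally show "mom b 5 = 120/((b+1)*(b+2)*(b+3)*(b+4)*(b+5))" .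
  have "mom b 6 = 1 - 6*b/(b+1) + 15*b/(b+2) - 20*b/(b+3) + 15*b/(b+4) - 6*b/(b+5) + 1*b/(b+6)" using p by (simp add: mom_def eval_nat_numeral atMost_Suc)
  also have "\<dots> = 720/((b+1)*(b+2)*(b+3)*(b+4)*(b+5)*(b+6))" using p by (simp add: divide_simps; simp add: algebra_simps)
  finally show "mom b 6 = 720/((b+1)*(b+2)*(b+3)*(b+4)*(b+5)*(b+6))" .
qed

fun pe :: "real list \<Rightarrow> real \<Rightarrow> real" where
  "pe [] w = 0" | "pe (c # cs) w = c + w * pe cs w"

fun pm :: "real \<Rightarrow> real list \<Rightarrow> nat \<Rightarrow> real" where
  "pm b [] k = 0" | "pm b (c # cs) k = c * mom b k + pm b cs (Suc k)"

lemma poly_int: assumes "b > 0" "l > 0"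
  shows "set_integrable lborel {0<..} (\<lambda>x. Wf l x ^ k * pe cs (Wf l x) * ecr_pdf b l x) \<and>
         (LINT x:{0<..}|lborel. Wf l x ^ k * pe cs (Wf l x) * ecr_pdf b l x) = pm b cs k"
proof (induction cs arbitrary: k)
  case Nil
  then show ?case by (simp add: set_integrable_def)
next
  case (Cons c cs)
  have eq: "(\<lambda>x. Wf l x ^ k * pe (c # cs) (Wf l x) * ecr_pdf b l x) =
     (\<lambda>x. c * (Wf l x ^ k * ecr_pdf b l x) + Wf l x ^ Suc k * pe cs (Wf l x) * ecr_pdf b l x)"
    by (auto simp: algebra_simps)
  have i1: "set_integrable lborel {0<..} (\<lambda>x. c * (Wf l x ^ k * ecr_pdf b l x))"
    using moment(1)[OF assms] by (rule set_integrable_mult_right)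
  have i2: "set_integrable lborel {0<..} (\<lambda>x. Wf l x ^ Suc k * pe cs (Wf l x) * ecr_pdf b l x)"
    using Cons[of "Suc k"] by simp
  show ?case unfolding eq
    using set_integral_add(1)[OF i1 i2] set_integral_add(2)[OF i1 i2] moment(2)[OF assms] Cons[of "Suc k"]
    by (simp add: set_integral_mult_right)
qed

lemma poly_int0: assumes "b > 0" "l > 0"
  shows "(LINT x:{0<..}|lborel. pe cs (Wf l x) * ecr_pdf b l x) = pm b cs 0"
  using poly_int[OF assms, of 0 cs] by simp


lemma logpdf_eq: assumes "x > 0" "b > 0" "l > 0"
  shows "ecr_logpdf x b l = ln b + ln l + ln x - 3/2 * ln (l\<^sup>2 + x\<^sup>2) + (b - 1) * ln (1 - Wf l x)"
proof -
  have q: "l\<^sup>2 + x\<^sup>2 > 0" using assms by (simp add: add_pos_pos)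
  have u: "1 - l / sqrt (l\<^sup>2 + x\<^sup>2) > 0" using Wf_bounds(2)[OF assms(3,1)] by (simp add: Wf_def)
  show ?thesis unfolding ecr_logpdf_def ecr_pdf_def
    using assms q u by (simp add: ln_mult ln_div ln_powr Wf_def)
qed

lemma W_deriv: assumes "l > 0"
  shows "((\<lambda>l. Wf l x) has_real_derivative (1 - (Wf l x)\<^sup>2) * Wf l x / l) (at l within S)"
proof -
  have q: "l\<^sup>2 + x\<^sup>2 > 0" using assms by (simp add: add_pos_nonneg)
  have s: "sqrt (l\<^sup>2 + x\<^sup>2) ^ 2 = l\<^sup>2 + x\<^sup>2" using q by simp
  have sp: "sqrt (l\<^sup>2 + x\<^sup>2) > 0" using q by simp
  have d1: "((\<lambda>l. l\<^sup>2 + x\<^sup>2) has_real_derivative 2 * l) (at l within S)"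
    by (auto intro!: derivative_eq_intros)
  have d2: "((\<lambda>l. sqrt (l\<^sup>2 + x\<^sup>2)) has_real_derivative inverse (sqrt (l\<^sup>2 + x\<^sup>2)) / 2 * (2 * l)) (at l within S)"
    by (rule DERIV_chain2[OF DERIV_real_sqrt[OF q] d1])
  have d3: "((\<lambda>l. l / sqrt (l\<^sup>2 + x\<^sup>2)) has_real_derivative
     (1 * sqrt (l\<^sup>2 + x\<^sup>2) - l * (inverse (sqrt (l\<^sup>2 + x\<^sup>2)) / 2 * (2 * l))) / (sqrt (l\<^sup>2 + x\<^sup>2) * sqrt (l\<^sup>2 + x\<^sup>2))) (at l within S)"
    by (rule DERIV_divide[OF DERIV_ident d2]) (use sp assms in simp)
  have e: "(1 * sqrt (l\<^sup>2 + x\<^sup>2) - l * (inverse (sqrt (l\<^sup>2 + x\<^sup>2)) / 2 * (2 * l))) / (sqrt (l\<^sup>2 + x\<^sup>2) * sqrt (l\<^sup>2 + x\<^sup>2))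
     = (1 - (l / sqrt (l\<^sup>2 + x\<^sup>2))\<^sup>2) * (l / sqrt (l\<^sup>2 + x\<^sup>2)) / l"
  proof -
    define r where "r = sqrt (l\<^sup>2 + x\<^sup>2)"
    have rr: "r * r = l\<^sup>2 + x\<^sup>2" using q by (simp add: r_def)
    have r0: "r \<noteq> 0" using sp unfolding r_def by linarith
    show ?thesis unfolding r_def[symmetric] using r0 assms rr
      by (simp add: divide_simps power2_eq_square; simp add: algebra_simps)
  qed
  show ?thesis unfolding Wf_def using d3 e by simp
qed

lemma pd1_eq: assumes "b > 0" "\<And>b'. b' > 0 \<Longrightarrow> g b' l = G b'" "(G has_real_derivative D) (at b)"
  shows "pd 1 g b l = D"
proof -
  have "eventually (\<lambda>b'. g b' l = G b') (nhds b)"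
    using eventually_nhds_in_open[of "{0<..}" b] assms(1) by (auto elim!: eventually_mono intro: assms(2))
  then have "deriv (\<lambda>b'. g b' l) b = deriv G b" by (rule deriv_cong_ev) simp
  then show ?thesis using DERIV_imp_deriv[OF assms(3)] by (simp add: pd_def)
qed

lemma pd2_eq: assumes "l > 0" "\<And>l'. l' > 0 \<Longrightarrow> g b l' = G l'" "(G has_real_derivative D) (at l)"
  shows "pd 2 g b l = D"
proof -
  have "eventually (\<lambda>l'. g b l' = G l') (nhds l)"
    using eventually_nhds_in_open[of "{0<..}" l] assms(1) by (auto elim!: eventually_mono intro: assms(2))
  then have "deriv (\<lambda>l'. g b l') l = deriv G l" by (rule deriv_cong_ev) simp
  then show ?thesis using DERIV_imp_deriv[OF assms(3)] by (simp add: pd_def)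
qed

lemma L1: assumes "x > 0" "b > 0" "l > 0"
  shows "pd 1 (ecr_logpdf x) b l = 1/b + ln (1 - Wf l x)"
  apply (rule pd1_eq[OF assms(2), where G="\<lambda>b. ln b + ln l + ln x - 3/2 * ln (l\<^sup>2 + x\<^sup>2) + (b - 1) * ln (1 - Wf l x)"])
  using assms apply (simp add: logpdf_eq)
  using assms by (auto intro!: derivative_eq_intros)

lemma L2: assumes "x > 0" "b > 0" "l > 0"
  shows "pd 2 (ecr_logpdf x) b l = (1 - 3 * (Wf l x)\<^sup>2 - (b - 1) * (Wf l x + (Wf l x)\<^sup>2)) / l"
proof -
  have W: "0 < Wf l x" "Wf l x < 1" using Wf_bounds[OF assms(3,1)] by auto
  have qp: "l\<^sup>2 + x\<^sup>2 > 0" using assms by (simp add: add_pos_pos)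
  have ql: "l / (l\<^sup>2 + x\<^sup>2) = (Wf l x)\<^sup>2 / l"
    using assms by (simp add: Wf_def power_divide add_pos_pos power2_eq_square)
  have D: "((\<lambda>l. ln b + ln l + ln x - 3/2 * ln (l\<^sup>2 + x\<^sup>2) + (b - 1) * ln (1 - Wf l x)) has_real_derivative
     1/l - 3/2 * (2 * l / (l\<^sup>2 + x\<^sup>2)) + (b - 1) * (- ((1 - (Wf l x)\<^sup>2) * Wf l x / l) / (1 - Wf l x))) (at l)"
    apply (intro derivative_eq_intros W_deriv)
    apply (use assms W in \<open>simp_all add: add_pos_pos\<close>)
    apply (rule W_deriv[OF assms(3)])
    using W qp by (simp add: divide_simps; simp add: algebra_simps)
  have e: "1/l - 3/2 * (2 * l / (l\<^sup>2 + x\<^sup>2)) + (b - 1) * (- ((1 - (Wf l x)\<^sup>2) * Wf l x / l) / (1 - Wf l x))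
      = (1 - 3 * (Wf l x)\<^sup>2 - (b - 1) * (Wf l x + (Wf l x)\<^sup>2)) / l"
  proof -
    have h0: "(1 - (Wf l x)\<^sup>2) / (1 - Wf l x) = 1 + Wf l x" using W
      by (simp add: power2_eq_square divide_simps; simp add: algebra_simps)
    have h1: "3/2 * (2 * l / (l\<^sup>2 + x\<^sup>2)) = 3 * (Wf l x)\<^sup>2 / l" using ql by simp
    have h2: "- ((1 - (Wf l x)\<^sup>2) * Wf l x / l) / (1 - Wf l x) = - ((1 + Wf l x) * Wf l x / l)"
      using h0 W assms by (simp add: divide_simps)
    show ?thesis unfolding h1 h2 using assms by (simp add: divide_simps; simp add: algebra_simps power2_eq_square)
  qed
  show ?thesis
    apply (rule pd2_eq[OF assms(3), where G="\<lambda>l. ln b + ln l + ln x - 3/2 * ln (l\<^sup>2 + x\<^sup>2) + (b - 1) * ln (1 - Wf l x)"])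
    using assms apply (simp add: logpdf_eq)
    using D e by simp
qed


lemma L11: assumes "x > 0" "b > 0" "l > 0"
  shows "pd 1 (pd 1 (ecr_logpdf x)) b l = -1 / b\<^sup>2"
  apply (rule pd1_eq[OF assms(2), where G="\<lambda>b. 1/b + ln (1 - Wf l x)"])
  using assms apply (simp add: L1[simplified])
  using assms by (auto intro!: derivative_eq_intros simp: power2_eq_square)

lemma L21: assumes "x > 0" "b > 0" "l > 0"
  shows "pd 2 (pd 1 (ecr_logpdf x)) b l = - (Wf l x + (Wf l x)\<^sup>2) / l"
proof -
  have W: "0 < Wf l x" "Wf l x < 1" using Wf_bounds[OF assms(3,1)] by auto
  have D: "((\<lambda>l. 1/b + ln (1 - Wf l x)) has_real_derivative - (Wf l x + (Wf l x)\<^sup>2) / l) (at l)"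
    apply (intro derivative_eq_intros W_deriv)
    apply (use assms W in \<open>simp_all\<close>)
    apply (rule W_deriv[OF assms(3)])
    using W assms by (simp add: divide_simps; simp add: algebra_simps power2_eq_square)
  show ?thesis
    apply (rule pd2_eq[OF assms(3), where G="\<lambda>l. 1/b + ln (1 - Wf l x)"])
    using assms apply (simp add: L1[simplified])
    using D by simp
qed

lemma L12: assumes "x > 0" "b > 0" "l > 0"
  shows "pd 1 (pd 2 (ecr_logpdf x)) b l = - (Wf l x + (Wf l x)\<^sup>2) / l"
  apply (rule pd1_eq[OF assms(2), where G="\<lambda>b. (1 - 3 * (Wf l x)\<^sup>2 - (b - 1) * (Wf l x + (Wf l x)\<^sup>2)) / l"])
  using assms apply (simp add: L2[simplified])
  using assms by (auto intro!: derivative_eq_intros simp: divide_simps)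

lemma L22: assumes "x > 0" "b > 0" "l > 0"
  shows "pd 2 (pd 2 (ecr_logpdf x)) b l =
    (-1 - (b+2) * (Wf l x)^2 + (b-1) * (Wf l x)^3 + (2*b+4) * (Wf l x)^4) / l\<^sup>2"
proof -
  have W: "0 < Wf l x" "Wf l x < 1" using Wf_bounds[OF assms(3,1)] by auto
  have D: "((\<lambda>l. (1 - 3 * (Wf l x)\<^sup>2 - (b - 1) * (Wf l x + (Wf l x)\<^sup>2)) / l) has_real_derivative
       (-1 - (b+2) * (Wf l x)^2 + (b-1) * (Wf l x)^3 + (2*b+4) * (Wf l x)^4) / l\<^sup>2) (at l)"
    apply (intro derivative_eq_intros W_deriv)
    apply (use assms W in \<open>simp_all\<close>)
    apply (rule W_deriv[OF assms(3)])+
    using W assms by (simp add: divide_simps; simp add: algebra_simps power2_eq_square power3_eq_cube power4_eq_xxxx)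
  show ?thesis
    apply (rule pd2_eq[OF assms(3), where G="\<lambda>l. (1 - 3 * (Wf l x)\<^sup>2 - (b - 1) * (Wf l x + (Wf l x)\<^sup>2)) / l"])
    using assms apply (simp add: L2[simplified])
    using D by simp
qed


lemma K111: assumes "x > 0" "b > 0" "l > 0"
  shows "pd 1 (pd 1 (pd 1 (ecr_logpdf x))) b l = 2 / b^3"
  apply (rule pd1_eq[OF assms(2), where G="\<lambda>b. -1 / b\<^sup>2"])
  using assms apply (simp add: L11[simplified])
  using assms by (auto intro!: derivative_eq_intros simp: divide_simps power2_eq_square power3_eq_cube)

lemma K211: assumes "x > 0" "b > 0" "l > 0"
  shows "pd 2 (pd 1 (pd 1 (ecr_logpdf x))) b l = 0"
  apply (rule pd2_eq[OF assms(3), where G="\<lambda>l. -1 / b\<^sup>2"])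
  using assms apply (simp add: L11[simplified])
  by (auto intro!: derivative_eq_intros)

lemma K121: assumes "x > 0" "b > 0" "l > 0"
  shows "pd 1 (pd 2 (pd 1 (ecr_logpdf x))) b l = 0"
  apply (rule pd1_eq[OF assms(2), where G="\<lambda>b. - (Wf l x + (Wf l x)\<^sup>2) / l"])
  using assms apply (simp add: L21[simplified])
  by (auto intro!: derivative_eq_intros)

lemma K112: assumes "x > 0" "b > 0" "l > 0"
  shows "pd 1 (pd 1 (pd 2 (ecr_logpdf x))) b l = 0"
  apply (rule pd1_eq[OF assms(2), where G="\<lambda>b. - (Wf l x + (Wf l x)\<^sup>2) / l"])
  using assms apply (simp add: L12[simplified])
  by (auto intro!: derivative_eq_intros)

lemma Dbl: assumes "x > 0" "l > 0"
  shows "((\<lambda>l. - (Wf l x + (Wf l x)\<^sup>2) / l) has_real_derivative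
     ((Wf l x)^3 + 2 * (Wf l x)^4 - (Wf l x)^2) / l\<^sup>2) (at l)"
proof -
  have W: "0 < Wf l x" "Wf l x < 1" using Wf_bounds[OF assms(2,1)] by auto
  show ?thesis
    apply (intro derivative_eq_intros W_deriv)
    apply (use assms W in \<open>simp_all\<close>)
    apply (rule W_deriv[OF assms(2)])+
    using W assms by (simp add: divide_simps; simp add: algebra_simps power2_eq_square power3_eq_cube power4_eq_xxxx)
qed

lemma K221: assumes "x > 0" "b > 0" "l > 0"
  shows "pd 2 (pd 2 (pd 1 (ecr_logpdf x))) b l = ((Wf l x)^3 + 2 * (Wf l x)^4 - (Wf l x)^2) / l\<^sup>2"
  apply (rule pd2_eq[OF assms(3), where G="\<lambda>l. - (Wf l x + (Wf l x)\<^sup>2) / l"])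
  using assms apply (simp add: L21[simplified])
  using Dbl[OF assms(1,3)] by simp

lemma K212: assumes "x > 0" "b > 0" "l > 0"
  shows "pd 2 (pd 1 (pd 2 (ecr_logpdf x))) b l = ((Wf l x)^3 + 2 * (Wf l x)^4 - (Wf l x)^2) / l\<^sup>2"
  apply (rule pd2_eq[OF assms(3), where G="\<lambda>l. - (Wf l x + (Wf l x)\<^sup>2) / l"])
  using assms apply (simp add: L12[simplified])
  using Dbl[OF assms(1,3)] by simp

lemma K122: assumes "x > 0" "b > 0" "l > 0"
  shows "pd 1 (pd 2 (pd 2 (ecr_logpdf x))) b l = ((Wf l x)^3 + 2 * (Wf l x)^4 - (Wf l x)^2) / l\<^sup>2"
  apply (rule pd1_eq[OF assms(2), where G="\<lambda>b. (-1 - (b+2) * (Wf l x)^2 + (b-1) * (Wf l x)^3 + (2*b+4) * (Wf l x)^4) / l\<^sup>2"])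
  using assms apply (simp add: L22[simplified])
  using assms by (auto intro!: derivative_eq_intros simp: divide_simps; simp add: algebra_simps)

lemma K222: assumes "x > 0" "b > 0" "l > 0"
  shows "pd 2 (pd 2 (pd 2 (ecr_logpdf x))) b l =
    (2 + (b-1) * (Wf l x)^3 + (6*b+12) * (Wf l x)^4 + (3 - 3*b) * (Wf l x)^5 - (8*b+16) * (Wf l x)^6) / l^3"
proof -
  have W: "0 < Wf l x" "Wf l x < 1" using Wf_bounds[OF assms(3,1)] by auto
  have D: "((\<lambda>l. (-1 - (b+2) * (Wf l x)^2 + (b-1) * (Wf l x)^3 + (2*b+4) * (Wf l x)^4) / l\<^sup>2) has_real_derivative
    (2 + (b-1) * (Wf l x)^3 + (6*b+12) * (Wf l x)^4 + (3 - 3*b) * (Wf l x)^5 - (8*b+16) * (Wf l x)^6) / l^3) (at l)"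
    apply (intro derivative_eq_intros W_deriv)
    apply (use assms W in \<open>simp_all\<close>)
    apply (rule W_deriv[OF assms(3)])+
    using W assms by (simp add: divide_simps; simp add: algebra_simps eval_nat_numeral)
  show ?thesis
    apply (rule pd2_eq[OF assms(3), where G="\<lambda>l. (-1 - (b+2) * (Wf l x)^2 + (b-1) * (Wf l x)^3 + (2*b+4) * (Wf l x)^4) / l\<^sup>2"])
    using assms apply (simp add: L22[simplified])
    using D by simp
qed


lemma mom_vals': assumes "b > 0" shows "mom b (Suc 0) = 1/(b+1)" "mom b (Suc (Suc 0)) = 2/((b+1)*(b+2))" "mom b (Suc (Suc (Suc 0))) = 6/((b+1)*(b+2)*(b+3))" "mom b (Suc (Suc (Suc (Suc 0)))) = 24/((b+1)*(b+2)*(b+3)*(b+4))" "mom b (Suc (Suc (Suc (Suc (Suc 0))))) = 120/((b+1)*(b+2)*(b+3)*(b+4)*(b+5))" "mom b (Suc (Suc (Suc (Suc (Suc (Suc 0)))))) = 720/((b+1)*(b+2)*(b+3)*(b+4)*(b+5)*(b+6))"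
proof -
  have e: "Suc 0 = 1" "Suc 1 = 2" "Suc 2 = 3" "Suc 3 = 4" "Suc 4 = 5" "Suc 5 = 6" by simp_all
  show "mom b (Suc 0) = 1/(b+1)" "mom b (Suc (Suc 0)) = 2/((b+1)*(b+2))" "mom b (Suc (Suc (Suc 0))) = 6/((b+1)*(b+2)*(b+3))" "mom b (Suc (Suc (Suc (Suc 0)))) = 24/((b+1)*(b+2)*(b+3)*(b+4))" "mom b (Suc (Suc (Suc (Suc (Suc 0))))) = 120/((b+1)*(b+2)*(b+3)*(b+4)*(b+5))" "mom b (Suc (Suc (Suc (Suc (Suc (Suc 0)))))) = 720/((b+1)*(b+2)*(b+3)*(b+4)*(b+5)*(b+6))" unfolding e using mom_vals[OF assms] by simp_all
qed

lemma expect_poly: assumes "b > 0" "l > 0" "\<And>x. x > 0 \<Longrightarrow> h x = c * pe cs (Wf l x)"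
  shows "ecr_expect b l h = c * pm b cs 0"
proof -
  have "ecr_expect b l h = (LINT x:{0<..}|lborel. c * (pe cs (Wf l x) * ecr_pdf b l x))"
    unfolding ecr_expect_def by (rule set_lebesgue_integral_cong) (auto simp: assms(3))
  also have "\<dots> = c * pm b cs 0" by (simp add: set_integral_mult_right poly_int0[OF assms(1,2)])
  finally show ?thesis .
qed

lemma kap11: assumes "b > 0" "l > 0"
  shows "kappa2 n 1 1 b l = real n * (-1 / b\<^sup>2)"
proof -
  have "ecr_expect b l (\<lambda>x. pd 1 (pd 1 (ecr_logpdf x)) b l) = (-1 / b\<^sup>2) * pm b [1] 0"
    by (rule expect_poly[OF assms]) (use assms in \<open>simp add: L11[simplified]\<close>)
  then show ?thesis using assms by (simp add: kappa2_def mom_vals)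
qed

lemma kap12: assumes "b > 0" "l > 0"
  shows "kappa2 n 1 2 b l = real n * (-(b+4)/((b+1)*(b+2))) / l"
    "kappa2 n 2 1 b l = real n * (-(b+4)/((b+1)*(b+2))) / l"
proof -
  have "ecr_expect b l (\<lambda>x. pd 1 (pd 2 (ecr_logpdf x)) b l) = (1/l) * pm b [0,-1,-1] 0"
    by (rule expect_poly[OF assms]) (simp only: L12[OF _ assms]; simp add: divide_simps; simp add: algebra_simps power2_eq_square)
  moreover have "ecr_expect b l (\<lambda>x. pd 2 (pd 1 (ecr_logpdf x)) b l) = (1/l) * pm b [0,-1,-1] 0"
    by (rule expect_poly[OF assms]) (simp only: L21[OF _ assms]; simp add: divide_simps; simp add: algebra_simps power2_eq_square)
  moreover have "pm b [0,-1,-1] 0 = -(b+4)/((b+1)*(b+2))"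
    using assms by (simp add: mom_vals' mom_vals(1) divide_simps; simp add: algebra_simps)
  ultimately show "kappa2 n 1 2 b l = real n * (-(b+4)/((b+1)*(b+2))) / l"
    "kappa2 n 2 1 b l = real n * (-(b+4)/((b+1)*(b+2))) / l" by (simp_all add: kappa2_def)
qed

lemma kap22: assumes "b > 0" "l > 0"
  shows "kappa2 n 2 2 b l = real n * (-(b*(b\<^sup>2+11*b+36))/((b+2)*(b+3)*(b+4))) / l\<^sup>2"
proof -
  have "ecr_expect b l (\<lambda>x. pd 2 (pd 2 (ecr_logpdf x)) b l) = (1/l\<^sup>2) * pm b [-1,0,-(b+2),b-1,2*b+4] 0"
    by (rule expect_poly[OF assms]) (simp only: L22[OF _ assms]; simp add: divide_simps eval_nat_numeral; simp add: algebra_simps)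
  moreover have "pm b [-1,0,-(b+2),b-1,2*b+4] 0 = -(b*(b\<^sup>2+11*b+36))/((b+2)*(b+3)*(b+4))"
    using assms by (simp add: mom_vals' mom_vals(1) divide_simps; simp add: algebra_simps power2_eq_square)
  ultimately show ?thesis by (simp add: kappa2_def)
qed


lemma kap3: assumes "b > 0" "l > 0"
  shows "kappa3 n 1 1 1 b l = real n * (2 / b^3)"
    "kappa3 n 1 1 2 b l = 0" "kappa3 n 1 2 1 b l = 0" "kappa3 n 2 1 1 b l = 0"
    "kappa3 n 1 2 2 b l = real n * ((48 - 8*b - 2*b\<^sup>2) / ((b+1)*(b+2)*(b+3)*(b+4))) / l\<^sup>2"
    "kappa3 n 2 1 2 b l = real n * ((48 - 8*b - 2*b\<^sup>2) / ((b+1)*(b+2)*(b+3)*(b+4))) / l\<^sup>2"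
    "kappa3 n 2 2 1 b l = real n * ((48 - 8*b - 2*b\<^sup>2) / ((b+1)*(b+2)*(b+3)*(b+4))) / l\<^sup>2"
    "kappa3 n 2 2 2 b l = real n * (2*b*(b^4 + 20*b^3 + 158*b\<^sup>2 + 691*b + 1866) / ((b+2)*(b+3)*(b+4)*(b+5)*(b+6))) / l^3"
proof -
  have "ecr_expect b l (\<lambda>x. pd 1 (pd 1 (pd 1 (ecr_logpdf x))) b l) = (2 / b^3) * pm b [1] 0"
    by (rule expect_poly[OF assms]) (simp only: K111[OF _ assms]; simp)
  then show "kappa3 n 1 1 1 b l = real n * (2 / b^3)" using assms by (simp add: kappa3_def mom_vals)
  have "ecr_expect b l (\<lambda>x. pd 1 (pd 1 (pd 2 (ecr_logpdf x))) b l) = 0 * pm b [1] 0"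
    by (rule expect_poly[OF assms]) (simp only: K112[OF _ assms]; simp)
  then show "kappa3 n 1 1 2 b l = 0" by (simp add: kappa3_def)
  have "ecr_expect b l (\<lambda>x. pd 1 (pd 2 (pd 1 (ecr_logpdf x))) b l) = 0 * pm b [1] 0"
    by (rule expect_poly[OF assms]) (simp only: K121[OF _ assms]; simp)
  then show "kappa3 n 1 2 1 b l = 0" by (simp add: kappa3_def)
  have "ecr_expect b l (\<lambda>x. pd 2 (pd 1 (pd 1 (ecr_logpdf x))) b l) = 0 * pm b [1] 0"
    by (rule expect_poly[OF assms]) (simp only: K211[OF _ assms]; simp)
  then show "kappa3 n 2 1 1 b l = 0" by (simp add: kappa3_def)
  have p122: "pm b [0,0,-1,1,2] 0 = (48 - 8*b - 2*b\<^sup>2) / ((b+1)*(b+2)*(b+3)*(b+4))"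
    using assms by (simp add: mom_vals' mom_vals(1) divide_simps; simp add: algebra_simps power2_eq_square)
  have "ecr_expect b l (\<lambda>x. pd 1 (pd 2 (pd 2 (ecr_logpdf x))) b l) = (1/l\<^sup>2) * pm b [0,0,-1,1,2] 0"
    by (rule expect_poly[OF assms]) (simp only: K122[OF _ assms]; simp add: divide_simps eval_nat_numeral; simp add: algebra_simps)
  then show "kappa3 n 1 2 2 b l = real n * ((48 - 8*b - 2*b\<^sup>2) / ((b+1)*(b+2)*(b+3)*(b+4))) / l\<^sup>2"
    using p122 by (simp add: kappa3_def)
  have "ecr_expect b l (\<lambda>x. pd 2 (pd 1 (pd 2 (ecr_logpdf x))) b l) = (1/l\<^sup>2) * pm b [0,0,-1,1,2] 0"
    by (rule expect_poly[OF assms]) (simp only: K212[OF _ assms]; simp add: divide_simps eval_nat_numeral; simp add: algebra_simps)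
  then show "kappa3 n 2 1 2 b l = real n * ((48 - 8*b - 2*b\<^sup>2) / ((b+1)*(b+2)*(b+3)*(b+4))) / l\<^sup>2"
    using p122 by (simp add: kappa3_def)
  have "ecr_expect b l (\<lambda>x. pd 2 (pd 2 (pd 1 (ecr_logpdf x))) b l) = (1/l\<^sup>2) * pm b [0,0,-1,1,2] 0"
    by (rule expect_poly[OF assms]) (simp only: K221[OF _ assms]; simp add: divide_simps eval_nat_numeral; simp add: algebra_simps)
  then show "kappa3 n 2 2 1 b l = real n * ((48 - 8*b - 2*b\<^sup>2) / ((b+1)*(b+2)*(b+3)*(b+4))) / l\<^sup>2"
    using p122 by (simp add: kappa3_def)
  have p222: "pm b [2,0,0,b-1,6*b+12,3-3*b,-(8*b+16)] 0 = 2*b*(b^4 + 20*b^3 + 158*b\<^sup>2 + 691*b + 1866) / ((b+2)*(b+3)*(b+4)*(b+5)*(b+6))"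
    using assms by (simp add: mom_vals' mom_vals(1) divide_simps; simp add: algebra_simps eval_nat_numeral)
  have "ecr_expect b l (\<lambda>x. pd 2 (pd 2 (pd 2 (ecr_logpdf x))) b l) = (1/l^3) * pm b [2,0,0,b-1,6*b+12,3-3*b,-(8*b+16)] 0"
    by (rule expect_poly[OF assms]) (simp only: K222[OF _ assms]; simp add: divide_simps eval_nat_numeral; simp add: algebra_simps)
  then show "kappa3 n 2 2 2 b l = real n * (2*b*(b^4 + 20*b^3 + 158*b\<^sup>2 + 691*b + 1866) / ((b+2)*(b+3)*(b+4)*(b+5)*(b+6))) / l^3"
    using p222 by (simp add: kappa3_def)
qed


lemma kapd: assumes "b > 0" "l > 0"
  shows "kappa2_d n 1 1 1 b l = real n * (2 / b^3)"
    "kappa2_d n 1 1 2 b l = 0"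
    "kappa2_d n 1 2 1 b l = real n * ((b\<^sup>2 + 8*b + 10) / ((b+1)\<^sup>2*(b+2)\<^sup>2)) / l"
    "kappa2_d n 2 1 1 b l = real n * ((b\<^sup>2 + 8*b + 10) / ((b+1)\<^sup>2*(b+2)\<^sup>2)) / l"
    "kappa2_d n 1 2 2 b l = real n * ((b+4)/((b+1)*(b+2))) / l\<^sup>2"
    "kappa2_d n 2 1 2 b l = real n * ((b+4)/((b+1)*(b+2))) / l\<^sup>2"
    "kappa2_d n 2 2 1 b l = real n * ((2*b^4 + 20*b^3 - 34*b\<^sup>2 - 528*b - 864) / ((b+2)\<^sup>2*(b+3)\<^sup>2*(b+4)\<^sup>2)) / l\<^sup>2"
    "kappa2_d n 2 2 2 b l = real n * (2*b*(b\<^sup>2+11*b+36)/((b+2)*(b+3)*(b+4))) / l^3"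
proof -
  show "kappa2_d n 1 1 1 b l = real n * (2 / b^3)" unfolding kappa2_d_def
    apply (rule pd1_eq[OF assms(1), where G="\<lambda>b. real n * (-1 / b\<^sup>2)"])
    apply (simp only: kap11[OF _ assms(2)])
    using assms by (auto intro!: derivative_eq_intros simp: divide_simps power2_eq_square power3_eq_cube)
  show "kappa2_d n 1 1 2 b l = 0" unfolding kappa2_d_def
    apply (rule pd2_eq[OF assms(2), where G="\<lambda>l. real n * (-1 / b\<^sup>2)"])
    apply (simp only: kap11[OF assms(1)])
    by (auto intro!: derivative_eq_intros)
  have d1: "((\<lambda>b. real n * (-(b+4)/((b+1)*(b+2))) / l) has_real_derivative real n * ((b\<^sup>2 + 8*b + 10) / ((b+1)\<^sup>2*(b+2)\<^sup>2)) / l) (at b)"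
    apply (rule derivative_eq_intros refl | (use assms in \<open>simp; fail\<close>))+
    using assms apply (simp_all add: divide_simps)
    apply (simp_all add: algebra_simps power2_eq_square eval_nat_numeral)
    done
  show "kappa2_d n 1 2 1 b l = real n * ((b\<^sup>2 + 8*b + 10) / ((b+1)\<^sup>2*(b+2)\<^sup>2)) / l" unfolding kappa2_d_def
    apply (rule pd1_eq[OF assms(1), where G="\<lambda>b. real n * (-(b+4)/((b+1)*(b+2))) / l"])
    apply (simp only: kap12[OF _ assms(2)])
    by (rule d1)
  show "kappa2_d n 2 1 1 b l = real n * ((b\<^sup>2 + 8*b + 10) / ((b+1)\<^sup>2*(b+2)\<^sup>2)) / l" unfolding kappa2_d_def
    apply (rule pd1_eq[OF assms(1), where G="\<lambda>b. real n * (-(b+4)/((b+1)*(b+2))) / l"])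
    apply (simp only: kap12[OF _ assms(2)])
    by (rule d1)
  have d2: "((\<lambda>l. real n * (-(b+4)/((b+1)*(b+2))) / l) has_real_derivative real n * ((b+4)/((b+1)*(b+2))) / l\<^sup>2) (at l)"
    apply (rule derivative_eq_intros refl | (use assms in \<open>simp; fail\<close>))+
    using assms apply (simp_all add: divide_simps)
    apply (simp_all add: algebra_simps power2_eq_square eval_nat_numeral)
    done
  show "kappa2_d n 1 2 2 b l = real n * ((b+4)/((b+1)*(b+2))) / l\<^sup>2" unfolding kappa2_d_def
    apply (rule pd2_eq[OF assms(2), where G="\<lambda>l. real n * (-(b+4)/((b+1)*(b+2))) / l"])
    apply (simp only: kap12[OF assms(1)])
    by (rule d2)
  show "kappa2_d n 2 1 2 b l = real n * ((b+4)/((b+1)*(b+2))) / l\<^sup>2" unfolding kappa2_d_def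
    apply (rule pd2_eq[OF assms(2), where G="\<lambda>l. real n * (-(b+4)/((b+1)*(b+2))) / l"])
    apply (simp only: kap12[OF assms(1)])
    by (rule d2)
  have d3: "((\<lambda>b. real n * (-(b*(b\<^sup>2+11*b+36))/((b+2)*(b+3)*(b+4))) / l\<^sup>2) has_real_derivative
      real n * ((2*b^4 + 20*b^3 - 34*b\<^sup>2 - 528*b - 864) / ((b+2)\<^sup>2*(b+3)\<^sup>2*(b+4)\<^sup>2)) / l\<^sup>2) (at b)"
    apply (rule derivative_eq_intros refl | (use assms in \<open>simp; fail\<close>))+
    using assms apply (simp_all add: divide_simps)
    apply (simp_all add: algebra_simps power2_eq_square eval_nat_numeral)
    done
  show "kappa2_d n 2 2 1 b l = real n * ((2*b^4 + 20*b^3 - 34*b\<^sup>2 - 528*b - 864) / ((b+2)\<^sup>2*(b+3)\<^sup>2*(b+4)\<^sup>2)) / l\<^sup>2"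
    unfolding kappa2_d_def
    apply (rule pd1_eq[OF assms(1), where G="\<lambda>b. real n * (-(b*(b\<^sup>2+11*b+36))/((b+2)*(b+3)*(b+4))) / l\<^sup>2"])
    apply (simp only: kap22[OF _ assms(2)])
    by (rule d3)
  have d4: "((\<lambda>l. real n * (-(b*(b\<^sup>2+11*b+36))/((b+2)*(b+3)*(b+4))) / l\<^sup>2) has_real_derivative
      real n * (2*b*(b\<^sup>2+11*b+36)/((b+2)*(b+3)*(b+4))) / l^3) (at l)"
    apply (rule derivative_eq_intros refl | (use assms in \<open>simp; fail\<close>))+
    using assms apply (simp_all add: divide_simps)
    apply (simp_all add: algebra_simps power2_eq_square eval_nat_numeral)
    done
  show "kappa2_d n 2 2 2 b l = real n * (2*b*(b\<^sup>2+11*b+36)/((b+2)*(b+3)*(b+4))) / l^3"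
    unfolding kappa2_d_def
    apply (rule pd2_eq[OF assms(2), where G="\<lambda>l. real n * (-(b*(b\<^sup>2+11*b+36))/((b+2)*(b+3)*(b+4))) / l\<^sup>2"])
    apply (simp only: kap22[OF assms(1)])
    by (rule d4)
qed
definition A11 :: "real \<Rightarrow> real" where "A11 b = (b^2*(b+1)^2*(b+2)*(0 - b^2 - 11*b - 36))"

definition A12 :: "real \<Rightarrow> real" where "A12 b = (b*(b+1)*(b+2)*(b+3)*(b+4)^2)"

definition A22 :: "real \<Rightarrow> real" where "A22 b = ((b+1)^2*(b+2)^2*(b+3)*(b+4)*(0 - 1) / (b))"

definition tau111 :: "real \<Rightarrow> real" where "tau111 b = (1 / (b^3))"

definition tau112 :: "real \<Rightarrow> real" where "tau112 b = 0"

definition tau121 :: "real \<Rightarrow> real" where "tau121 b = ((b^2 + 8*b + 10) / ((b+1)^2*(b+2)^2))"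

definition tau122 :: "real \<Rightarrow> real" where "tau122 b = ((b^3 + 12*b^2 + 44*b + 24) / ((b+1)*(b+2)*(b+3)*(b+4)))"

definition tau211 :: "real \<Rightarrow> real" where "tau211 b = ((b^2 + 8*b + 10) / ((b+1)^2*(b+2)^2))"

definition tau212 :: "real \<Rightarrow> real" where "tau212 b = ((b^3 + 12*b^2 + 44*b + 24) / ((b+1)*(b+2)*(b+3)*(b+4)))"

definition tau221 :: "real \<Rightarrow> real" where "tau221 b = ((3*b^5 + 35*b^4 + 24*b^3 - 650*b^2 - 1920*b - 1440) / ((b+1)*(b+2)^2*(b+3)^2*(b+4)^2))"

definition tau222 :: "real \<Rightarrow> real" where "tau222 b = (b*(b^4 + 24*b^3 + 216*b^2 + 761*b + 294) / ((b+2)*(b+3)*(b+4)*(b+5)*(b+6)))"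

definition T1111 :: "real \<Rightarrow> real" where "T1111 b = (b*(b+1)^4*(b+2)^2*(b^4 + 22*b^3 + 193*b^2 + 792*b + 1296))"

definition T1112 :: "real \<Rightarrow> real" where "T1112 b = 0"

definition T1121 :: "real \<Rightarrow> real" where "T1121 b = (b^3*(b+1)*(b+3)*(b+4)^2*(0 - b^4 - 19*b^3 - 134*b^2 - 398*b - 360))"

definition T1122 :: "real \<Rightarrow> real" where "T1122 b = (b*(b+1)^3*(b+2)^2*(b^5 + 23*b^4 + 212*b^3 + 940*b^2 + 1848*b + 864))"

definition T1211 :: "real \<Rightarrow> real" where "T1211 b = (b^3*(b+1)*(b+3)*(b+4)^2*(0 - b^4 - 19*b^3 - 134*b^2 - 398*b - 360))"

definition T1212 :: "real \<Rightarrow> real" where "T1212 b = (b^2*(b+1)*(b+2)*(b+3)*(b+4)^3*(b^3 + 12*b^2 + 44*b + 24))"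

definition T1221 :: "real \<Rightarrow> real" where "T1221 b = (b^2*(b+1)*(b+4)^2*(3*b^5 + 35*b^4 + 24*b^3 - 650*b^2 - 1920*b - 1440))"

definition T1222 :: "real \<Rightarrow> real" where "T1222 b = (b*(b+1)^3*(b+2)^2*(b+3)*(b+4)^2*(0 - b^4 - 24*b^3 - 216*b^2 - 761*b - 294) / ((b+5)*(b+6)))"

definition T2111 :: "real \<Rightarrow> real" where "T2111 b = ((b+1)^3*(b+2)^2*(b+3)*(b+4)^2*(0 - b^2 - 11*b - 36))"

definition T2112 :: "real \<Rightarrow> real" where "T2112 b = 0"

definition T2121 :: "real \<Rightarrow> real" where "T2121 b = (b^2*(b+3)^2*(b+4)^4*(b^2 + 8*b + 10))"

definition T2122 :: "real \<Rightarrow> real" where "T2122 b = ((b+1)^2*(b+2)^2*(b+3)*(b+4)^2*(0 - b^3 - 12*b^2 - 44*b - 24))"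

definition T2211 :: "real \<Rightarrow> real" where "T2211 b = (b*(b+1)^2*(b+2)*(b+3)*(b+4)*(b^4 + 19*b^3 + 134*b^2 + 398*b + 360))"

definition T2212 :: "real \<Rightarrow> real" where "T2212 b = ((b+1)^2*(b+2)^2*(b+3)*(b+4)^2*(0 - b^3 - 12*b^2 - 44*b - 24))"

definition T2221 :: "real \<Rightarrow> real" where "T2221 b = ((b+1)^2*(b+2)*(b+4)*(0 - 3*b^5 - 35*b^4 - 24*b^3 + 650*b^2 + 1920*b + 1440))"

definition T2222 :: "real \<Rightarrow> real" where "T2222 b = ((b+1)^4*(b+2)^3*(b+3)*(b+4)*(b^4 + 24*b^3 + 216*b^2 + 761*b + 294) / (b*(b+5)*(b+6)))"

lemma pT1111: "b > 0 \<Longrightarrow> A11 b * A11 b * tau111 b = T1111 b"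

  unfolding A11_def A12_def A22_def tau111_def T1111_def by (simp add: divide_simps; simp add: algebra_simps eval_nat_numeral)

lemma pT1112: "b > 0 \<Longrightarrow> A11 b * A12 b * tau112 b = T1112 b"

  unfolding A11_def A12_def A22_def tau112_def T1112_def by (simp add: divide_simps; simp add: algebra_simps eval_nat_numeral)

lemma pT1121: "b > 0 \<Longrightarrow> A11 b * A12 b * tau121 b = T1121 b"

  unfolding A11_def A12_def A22_def tau121_def T1121_def by (simp add: divide_simps; simp add: algebra_simps eval_nat_numeral)

lemma pT1122: "b > 0 \<Longrightarrow> A11 b * A22 b * tau122 b = T1122 b"

  unfolding A11_def A12_def A22_def tau122_def T1122_def by (simp add: divide_simps; simp add: algebra_simps eval_nat_numeral)

lemma pT1211: "b > 0 \<Longrightarrow> A12 b * A11 b * tau211 b = T1211 b"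

  unfolding A11_def A12_def A22_def tau211_def T1211_def by (simp add: divide_simps; simp add: algebra_simps eval_nat_numeral)

lemma pT1212: "b > 0 \<Longrightarrow> A12 b * A12 b * tau212 b = T1212 b"

  unfolding A11_def A12_def A22_def tau212_def T1212_def by (simp add: divide_simps; simp add: algebra_simps eval_nat_numeral)

lemma pT1221: "b > 0 \<Longrightarrow> A12 b * A12 b * tau221 b = T1221 b"

  unfolding A11_def A12_def A22_def tau221_def T1221_def by (simp add: divide_simps; simp add: algebra_simps eval_nat_numeral)

lemma pT1222: "b > 0 \<Longrightarrow> A12 b * A22 b * tau222 b = T1222 b"

  unfolding A11_def A12_def A22_def tau222_def T1222_def by (simp add: divide_simps; simp add: algebra_simps eval_nat_numeral)

lemma pT2111: "b > 0 \<Longrightarrow> A12 b * A11 b * tau111 b = T2111 b"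

  unfolding A11_def A12_def A22_def tau111_def T2111_def by (simp add: divide_simps; simp add: algebra_simps eval_nat_numeral)

lemma pT2112: "b > 0 \<Longrightarrow> A12 b * A12 b * tau112 b = T2112 b"

  unfolding A11_def A12_def A22_def tau112_def T2112_def by (simp add: divide_simps; simp add: algebra_simps eval_nat_numeral)

lemma pT2121: "b > 0 \<Longrightarrow> A12 b * A12 b * tau121 b = T2121 b"

  unfolding A11_def A12_def A22_def tau121_def T2121_def by (simp add: divide_simps; simp add: algebra_simps eval_nat_numeral)

lemma pT2122: "b > 0 \<Longrightarrow> A12 b * A22 b * tau122 b = T2122 b"

  unfolding A11_def A12_def A22_def tau122_def T2122_def by (simp add: divide_simps; simp add: algebra_simps eval_nat_numeral)

lemma pT2211: "b > 0 \<Longrightarrow> A22 b * A11 b * tau211 b = T2211 b"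

  unfolding A11_def A12_def A22_def tau211_def T2211_def by (simp add: divide_simps; simp add: algebra_simps eval_nat_numeral)

lemma pT2212: "b > 0 \<Longrightarrow> A22 b * A12 b * tau212 b = T2212 b"

  unfolding A11_def A12_def A22_def tau212_def T2212_def by (simp add: divide_simps; simp add: algebra_simps eval_nat_numeral)

lemma pT2221: "b > 0 \<Longrightarrow> A22 b * A12 b * tau221 b = T2221 b"

  unfolding A11_def A12_def A22_def tau221_def T2221_def by (simp add: divide_simps; simp add: algebra_simps eval_nat_numeral)

lemma pT2222: "b > 0 \<Longrightarrow> A22 b * A22 b * tau222 b = T2222 b"

  unfolding A11_def A12_def A22_def tau222_def T2222_def by (simp add: divide_simps; simp add: algebra_simps eval_nat_numeral)

lemma Cpos: assumes "b > 0" shows "Cpoly b > 0"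
proof -
  have e: "Cpoly b = (b-4)^2*(b+1) + 2*b + 56" by (simp add: Cpoly_def algebra_simps power2_eq_square power3_eq_cube)
  have "(b-4)^2*(b+1) \<ge> 0" using assms by simp
  then show ?thesis unfolding e using assms by linarith
qed

lemma final1: assumes "b > 0" shows "(T1111 b + T1112 b + T1121 b + T1122 b + T1211 b + T1212 b + T1221 b + T1222 b) / (Cpoly b)^2 = (b^3 + 13*b^2 + 122*b + 380
             - 699840 / (19321 * (b + 5)) + 96000 / (361 * (b + 6))
             + 432 * (4085783*b^2 - 8192586*b - 40352456) / (2641 * (Cpoly b)^2)
             - 12 * (70740551*b^2 + 3809213278*b - 35831044156) / (6974881 * Cpoly b))"
proof -
  have c: "b^3 - 7*b^2 + 10*b + 72 \<noteq> 0" using Cpos[OF assms] by (simp add: Cpoly_def)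
  show ?thesis using assms c unfolding T1111_def T1112_def T1121_def T1122_def T1211_def T1212_def T1221_def T1222_def T2111_def T2112_def T2121_def T2122_def T2211_def T2212_def T2221_def T2222_def Cpoly_def
    by (simp add: divide_simps; simp add: algebra_simps eval_nat_numeral)
qed

lemma final2: assumes "b > 0" shows "(T2111 b + T2112 b + T2121 b + T2122 b + T2211 b + T2212 b + T2221 b + T2222 b) / (Cpoly b)^2 = (8*b + 86 + 49 / (270 * b)
             - 1679616 / (96605 * (b + 5)) + 80000 / (1083 * (b + 6))
             - 8 * (84037561*b^2 + 21509105*b - 393761162) / (7923 * (Cpoly b)^2)
             + (356431397749*b^2 - 158970444943*b - 4636191041858) / (376643574 * Cpoly b))"
proof -
  have c: "b^3 - 7*b^2 + 10*b + 72 \<noteq> 0" using Cpos[OF assms] by (simp add: Cpoly_def)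
  show ?thesis using assms c unfolding T1111_def T1112_def T1121_def T1122_def T1211_def T1212_def T1221_def T1222_def T2111_def T2112_def T2121_def T2122_def T2211_def T2212_def T2221_def T2222_def Cpoly_def
    by (simp add: divide_simps; simp add: algebra_simps eval_nat_numeral)
qed
lemma kinv: assumes "b > 0" "l > 0" "n > 0"
  shows "kappa_inv n 1 1 b l = A11 b / Cpoly b / real n"
    "kappa_inv n 1 2 b l = A12 b / Cpoly b / real n * l"
    "kappa_inv n 2 1 b l = A12 b / Cpoly b / real n * l"
    "kappa_inv n 2 2 b l = A22 b / Cpoly b / real n * l^2"
proof -
  have c: "b^3 - 7*b^2 + 10*b + 72 \<noteq> 0" using Cpos[OF assms(1)] by (simp add: Cpoly_def)
  have n: "real n \<noteq> 0" using assms by simp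
  note K = kap11[OF assms(1,2)] kap12[OF assms(1,2)] kap22[OF assms(1,2)]
  have dv: "kappa2 n 1 1 b l * kappa2 n 2 2 b l - kappa2 n 1 2 b l * kappa2 n 2 1 b l
     = (real n)^2 * Cpoly b / (b*(b+1)^2*(b+2)^2*(b+3)*(b+4)) / l^2"
    unfolding K using assms by (simp add: Cpoly_def divide_simps; simp add: algebra_simps eval_nat_numeral)
  have cp: "Cpoly b \<noteq> 0" using Cpos[OF assms(1)] by simp
  note U = kappa_inv_def Let_def dv
  show "kappa_inv n 1 1 b l = A11 b / Cpoly b / real n"
    unfolding U unfolding K using assms cp n
    by (simp add: A11_def divide_simps; simp add: algebra_simps eval_nat_numeral)
  show "kappa_inv n 1 2 b l = A12 b / Cpoly b / real n * l"
    unfolding U unfolding K using assms cp n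
    by (simp add: A12_def divide_simps; simp add: algebra_simps eval_nat_numeral)
  show "kappa_inv n 2 1 b l = A12 b / Cpoly b / real n * l"
    unfolding U unfolding K using assms cp n
    by (simp add: A12_def divide_simps; simp add: algebra_simps eval_nat_numeral)
  show "kappa_inv n 2 2 b l = A22 b / Cpoly b / real n * l^2"
    unfolding U unfolding K using assms cp n
    by (simp add: A22_def divide_simps; simp add: algebra_simps eval_nat_numeral)
qed

lemma taus: assumes "b > 0" "l > 0"
  shows "kappa2_d n 1 1 1 b l - kappa3 n 1 1 1 b l / 2 = real n * tau111 b / l^0"
    "kappa2_d n 1 1 2 b l - kappa3 n 1 1 2 b l / 2 = real n * tau112 b / l^1"
    "kappa2_d n 1 2 1 b l - kappa3 n 1 2 1 b l / 2 = real n * tau121 b / l^1"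
    "kappa2_d n 1 2 2 b l - kappa3 n 1 2 2 b l / 2 = real n * tau122 b / l^2"
    "kappa2_d n 2 1 1 b l - kappa3 n 2 1 1 b l / 2 = real n * tau211 b / l^1"
    "kappa2_d n 2 1 2 b l - kappa3 n 2 1 2 b l / 2 = real n * tau212 b / l^2"
    "kappa2_d n 2 2 1 b l - kappa3 n 2 2 1 b l / 2 = real n * tau221 b / l^2"
    "kappa2_d n 2 2 2 b l - kappa3 n 2 2 2 b l / 2 = real n * tau222 b / l^3"
proof -
  show "kappa2_d n 1 1 1 b l - kappa3 n 1 1 1 b l / 2 = real n * tau111 b / l^0"
    unfolding kapd[OF assms] kap3[OF assms] using assms by (simp add: tau111_def divide_simps; simp add: algebra_simps eval_nat_numeral)
  show "kappa2_d n 1 1 2 b l - kappa3 n 1 1 2 b l / 2 = real n * tau112 b / l^1"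
    unfolding kapd[OF assms] kap3[OF assms] using assms by (simp add: tau112_def divide_simps; simp add: algebra_simps eval_nat_numeral)
  show "kappa2_d n 1 2 1 b l - kappa3 n 1 2 1 b l / 2 = real n * tau121 b / l^1"
    unfolding kapd[OF assms] kap3[OF assms] using assms by (simp add: tau121_def divide_simps; simp add: algebra_simps eval_nat_numeral)
  show "kappa2_d n 1 2 2 b l - kappa3 n 1 2 2 b l / 2 = real n * tau122 b / l^2"
    unfolding kapd[OF assms] kap3[OF assms] using assms by (simp add: tau122_def divide_simps; simp add: algebra_simps eval_nat_numeral)
  show "kappa2_d n 2 1 1 b l - kappa3 n 2 1 1 b l / 2 = real n * tau211 b / l^1"
    unfolding kapd[OF assms] kap3[OF assms] using assms by (simp add: tau211_def divide_simps; simp add: algebra_simps eval_nat_numeral)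
  show "kappa2_d n 2 1 2 b l - kappa3 n 2 1 2 b l / 2 = real n * tau212 b / l^2"
    unfolding kapd[OF assms] kap3[OF assms] using assms by (simp add: tau212_def divide_simps; simp add: algebra_simps eval_nat_numeral)
  show "kappa2_d n 2 2 1 b l - kappa3 n 2 2 1 b l / 2 = real n * tau221 b / l^2"
    unfolding kapd[OF assms] kap3[OF assms] using assms by (simp add: tau221_def divide_simps; simp add: algebra_simps eval_nat_numeral)
  show "kappa2_d n 2 2 2 b l - kappa3 n 2 2 2 b l / 2 = real n * tau222 b / l^3"
    unfolding kapd[OF assms] kap3[OF assms] using assms by (simp add: tau222_def divide_simps; simp add: algebra_simps eval_nat_numeral)
qed
theorem proposition11:
  fixes n :: nat and b l :: real
  assumes "n > 0" and "b > 0" and "l > 0"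
  shows "cox_snell_bias n 1 b l =
           (1 / real n) * (b^3 + 13*b^2 + 122*b + 380
             - 699840 / (19321 * (b + 5)) + 96000 / (361 * (b + 6))
             + 432 * (4085783*b^2 - 8192586*b - 40352456) / (2641 * (Cpoly b)^2)
             - 12 * (70740551*b^2 + 3809213278*b - 35831044156) / (6974881 * Cpoly b)) \<and>
         cox_snell_bias n 2 b l =
           (l / real n) * (8*b + 86 + 49 / (270 * b)
             - 1679616 / (96605 * (b + 5)) + 80000 / (1083 * (b + 6))
             - 8 * (84037561*b^2 + 21509105*b - 393761162) / (7923 * (Cpoly b)^2)
             + (356431397749*b^2 - 158970444943*b - 4636191041858) / (376643574 * Cpoly b))"
proof -
  have sum12: "\<And>f. (\<Sum>r\<in>{1,2::nat}. f r) = f 1 + f 2" by simp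
  have cp: "Cpoly b \<noteq> 0" using Cpos[OF assms(2)] by simp
  have nn: "real n \<noteq> 0" using assms by simp
  have e1: "cox_snell_bias n 1 b l = (1 / real n) * ((T1111 b + T1112 b + T1121 b + T1122 b + T1211 b + T1212 b + T1221 b + T1222 b) / (Cpoly b)^2)"
    unfolding cox_snell_bias_def sum12 taus[OF assms(2,3)] kinv[OF assms(2,3,1)]
    unfolding pT1111[OF assms(2), symmetric] pT1112[OF assms(2), symmetric] pT1121[OF assms(2), symmetric] pT1122[OF assms(2), symmetric] pT1211[OF assms(2), symmetric] pT1212[OF assms(2), symmetric] pT1221[OF assms(2), symmetric] pT1222[OF assms(2), symmetric]
    using cp nn assms by (simp add: divide_simps; simp add: algebra_simps eval_nat_numeral)
  have e2: "cox_snell_bias n 2 b l = (l / real n) * ((T2111 b + T2112 b + T2121 b + T2122 b + T2211 b + T2212 b + T2221 b + T2222 b) / (Cpoly b)^2)"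
    unfolding cox_snell_bias_def sum12 taus[OF assms(2,3)] kinv[OF assms(2,3,1)]
    unfolding pT2111[OF assms(2), symmetric] pT2112[OF assms(2), symmetric] pT2121[OF assms(2), symmetric] pT2122[OF assms(2), symmetric] pT2211[OF assms(2), symmetric] pT2212[OF assms(2), symmetric] pT2221[OF assms(2), symmetric] pT2222[OF assms(2), symmetric]
    using cp nn assms by (simp add: divide_simps; simp add: algebra_simps eval_nat_numeral)
  show ?thesis unfolding e1 e2 final1[OF assms(2)] final2[OF assms(2)] by simp
qed

end
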